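(* Let $n,m\in\mathbb{N}$, let $\mathcal{Y}\subset\mathbb{R}^m$ be nonempty, convex and compact, and let $f:2^{[n]}\times\mathbb{R}^m\to\mathbb{R}$ be such that $f(\cdot,y)$ is submodular for every $y$ and $f(S,\cdot)$ is concave and continuous for every $S\subset[n]$. Let $f^L$ be the Lovász extension of $f$ with respect to the first variable. Then $$\max_{y\in\mathcal{Y}}\min_{S\subset[n]}f(S,y)\le\min_{S\subset[n]}\max_{y\in\mathcal{Y}}f(S,y).$$ Moreover, if $$\min_{x\in[0,1]^n}\max_{y\in\mathcal{Y}}f^L(x,y)=\min_{x\in\{0,1\}^n}\max_{y\in\mathcal{Y}}f^L(x,y),$$ then $\max_{y\in\mathcal{Y}}\min_{S\subset[n]}f(S,y)=\min_{S\subset[n]}\max_{y\in\mathcal{Y}}f(S,y)=\min_{x\in[0,1]^n}\max_{y\in\mathcal{Y}}f^L(x,y)$, and $f$ admits a saddle point on $2^{[n]}\times\mathcal{Y}$.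
   Context: $[n]=\{1,\dots,n\}$; subsets $S\subset[n]$ are identified with their indicator vectors $\chi_S\in\{0,1\}^n$. A set function $g:2^{[n]}\to\mathbb{R}$ is submodular if $g(S)+g(T)\ge g(S\cap T)+g(S\cup T)$ for all $S,T\subset[n]$. Lovász extension: for $g:2^{[n]}\to\mathbb{R}$ and $x\in[0,1]^n$, choose a permutation $(j_1,\dots,j_n)$ of $[n]$ with $x_{j_1}\ge\dots\ge x_{j_n}$ and set $g^L(x)=(1-x_{j_1})\,g(\emptyset)+\sum_{k=1}^{n-1}(x_{j_k}-x_{j_{k+1}})\,g(\{j_1,\dots,j_k\})+x_{j_n}\,g([n])$. For $f:2^{[n]}\times\mathbb{R}^m\to\mathbb{R}$, the Lovász extension with respect to the first variable is $f^L(x,y):=(f(\cdot,y))^L(x)$. A saddle point of $f$ on $2^{[n]}\times\mathcal{Y}$ is a pair $(S^*,y^* )\in2^{[n]}\times\mathcal{Y}$ with $f(S^*,y)\le f(S^*,y^* )\le f(S,y^* )$ for all $S\subset[n]$, $y\in\mathcal{Y}$. *)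

theory Defs
  imports "HOL-Analysis.Analysis"
begin

text \<open>Ground set [n] = {1..n}; subsets of [n] are sets S \<subseteq> {1..n};
points of [0,1]^n are extensional functions on {1..n} with values in [0,1].\<close>

definition submodular_on :: "nat \<Rightarrow> (nat set \<Rightarrow> real) \<Rightarrow> bool" where
  "submodular_on n g \<longleftrightarrow>
     (\<forall>S T. S \<subseteq> {1..n} \<longrightarrow> T \<subseteq> {1..n} \<longrightarrow> g S + g T \<ge> g (S \<inter> T) + g (S \<union> T))"

definition dec_order :: "nat \<Rightarrow> (nat \<Rightarrow> real) \<Rightarrow> nat list" where
  "dec_order n x = (SOME js. distinct js \<and> set js = {1..n} \<and> sorted_wrt (\<lambda>a b. x a \<ge> x b) js)"

definition lovasz :: "nat \<Rightarrow> (nat set \<Rightarrow> real) \<Rightarrow> (nat \<Rightarrow> real) \<Rightarrow> real" where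
  "lovasz n g x =
    (let js = dec_order n x in
     if n = 0 then g {} else
       (1 - x (js ! 0)) * g {}
       + (\<Sum>k\<in>{1..n-1}. (x (js ! (k-1)) - x (js ! k)) * g (set (take k js)))
       + x (js ! (n-1)) * g {1..n})"

definition lovasz2 :: "nat \<Rightarrow> (nat set \<Rightarrow> 'b \<Rightarrow> real) \<Rightarrow> (nat \<Rightarrow> real) \<Rightarrow> 'b \<Rightarrow> real" where
  "lovasz2 n f x y = lovasz n (\<lambda>S. f S y) x"

definition saddle_point :: "nat \<Rightarrow> (nat set \<Rightarrow> 'b \<Rightarrow> real) \<Rightarrow> 'b set \<Rightarrow> nat set \<Rightarrow> 'b \<Rightarrow> bool" where
  "saddle_point n f Y S0 y0 \<longleftrightarrow> S0 \<subseteq> {1..n} \<and> y0 \<in> Y \<and>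
     (\<forall>S y. S \<subseteq> {1..n} \<longrightarrow> y \<in> Y \<longrightarrow> f S0 y \<le> f S0 y0 \<and> f S0 y0 \<le> f S y0)"

end

theory Submission
  imports Defs
begin


lemma concave_superlevel_convex:
  assumes "concave_on Y F" shows "convex {y\<in>Y. c \<le> F y}"
  unfolding convex_def
proof (intro ballI allI impI)
  fix x y and u v :: real
  assume x: "x \<in> {y\<in>Y. c \<le> F y}" and y: "y \<in> {y\<in>Y. c \<le> F y}" and u: "0 \<le> u" and v: "0 \<le> v" and uv: "u + v = 1"
  have cY: "convex Y" using assms concave_on_imp_convex by blast
  have A: "u * F x + v * F y \<le> F (u *\<^sub>R x + v *\<^sub>R y)"
    using assms x y u v uv unfolding concave_on_iff by auto
  have B: "u * c \<le> u * F x" "v * c \<le> v * F y" using x y u v by (auto intro: mult_left_mono)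
  have C: "u *\<^sub>R x + v *\<^sub>R y \<in> Y" using cY x y u v uv unfolding convex_def by auto
  show "u *\<^sub>R x + v *\<^sub>R y \<in> {y\<in>Y. c \<le> F y}"
  proof -
    have "c = u * c + v * c" using uv by (metis distrib_right mult_1)
    thus ?thesis using A B C by auto
  qed
qed

lemma concave_comb:
  assumes "concave_on Y g" "concave_on Y h" "0 \<le> t" "t \<le> 1"
  shows "concave_on Y (\<lambda>y. t * g y + (1 - t) * h y)"
  using assms by (intro concave_on_add concave_on_cmul) auto

lemma concave_sum:
  assumes "finite I" "convex Y" "\<forall>i\<in>I. concave_on Y (g i)" "\<forall>i\<in>I. 0 \<le> \<mu> i"
  shows "concave_on Y (\<lambda>y. \<Sum>i\<in>I. \<mu> i * g i y)"
  using assms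
proof (induction I rule: finite_induct)
  case empty then show ?case by (simp add: concave_on_const)
next
  case (insert k I)
  then show ?case by (simp, intro concave_on_add concave_on_cmul) auto
qed

lemma conn_split:
  assumes "connected S" "closed A" "closed B" "S \<subseteq> A \<union> B" "A \<inter> B \<inter> S = {}" "A \<inter> S \<noteq> {}" "B \<inter> S \<noteq> {}"
  shows False
  using assms unfolding connected_closed by blast

lemma two_fun:
  fixes Y :: "'b::real_normed_vector set"
  assumes Y: "compact Y" "convex Y" and cg: "concave_on Y g" and ch: "concave_on Y h"
    and contg: "continuous_on Y g" and conth: "continuous_on Y h"
    and lt: "\<forall>y\<in>Y. g y < c \<or> h y < c"
  shows "\<exists>t\<in>{0..1}. \<forall>y\<in>Y. t * g y + (1 - t) * h y < c"
proof (rule ccontr)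
  assume "\<not> ?thesis"
  hence ex: "\<forall>t\<in>{0..1}. \<exists>y\<in>Y. c \<le> t * g y + (1 - t) * h y" by (auto simp: not_less)
  define F where "F = (\<lambda>(t::real) y. t * g y + (1 - t) * h y)"
  have disj: "c \<le> g y \<or> c \<le> h y" if "t \<in> {0..1}" "y \<in> Y" "c \<le> F t y" for t y
  proof (rule ccontr)
    assume "\<not> ?thesis"
    hence a: "g y < c" "h y < c" by auto
    show False
    proof (cases "t = 0")
      case True then show ?thesis using that a by (simp add: F_def)
    next
      case False
      hence "t * g y < t * c" using that a by auto
      moreover have "(1 - t) * h y \<le> (1 - t) * c" using that a by (intro mult_left_mono) auto
      ultimately show ?thesis using that by (simp add: F_def algebra_simps)
    qed
  qed
  have closedY: "closed Y" using Y compact_imp_closed by blast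
  define K1 where "K1 = {p \<in> {0..1} \<times> Y. c \<le> F (fst p) (snd p) \<and> c \<le> g (snd p)}"
  define K2 where "K2 = {p \<in> {0..1} \<times> Y. c \<le> F (fst p) (snd p) \<and> c \<le> h (snd p)}"
  have cg2: "continuous_on ({0..1::real} \<times> Y) (\<lambda>p. g (snd p))"
    by (rule continuous_on_compose2[OF contg]) (auto intro: continuous_intros)
  have ch2: "continuous_on ({0..1::real} \<times> Y) (\<lambda>p. h (snd p))"
    by (rule continuous_on_compose2[OF conth]) (auto intro: continuous_intros)
  have cF: "continuous_on ({0..1} \<times> Y) (\<lambda>p. F (fst p) (snd p))"
    unfolding F_def using cg2 ch2 by (auto intro!: continuous_intros)
  have cT: "compact ({0..1::real} \<times> Y)" using Y by (intro compact_Times) auto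
  have eqK1: "K1 = {p \<in> {0..1} \<times> Y. c \<le> F (fst p) (snd p)} \<inter> {p \<in> {0..1} \<times> Y. c \<le> g (snd p)}"
    unfolding K1_def by auto
  have cl1K1: "closed {p \<in> {0..1} \<times> Y. c \<le> F (fst p) (snd p)}"
    by (rule continuous_on_closed_Collect_le[OF continuous_on_const cF compact_imp_closed[OF cT]])
  have cl2K1: "closed {p \<in> {0..1::real} \<times> Y. c \<le> g (snd p)}"
    using continuous_on_closed_Collect_le[OF continuous_on_const cg2 compact_imp_closed[OF cT]] by simp
  have "closed K1" unfolding eqK1 by (rule closed_Int[OF cl1K1 cl2K1])
  moreover have "K1 \<subseteq> {0..1} \<times> Y" unfolding K1_def by auto
  ultimately have "compact K1" using cT by (metis compact_Int_closed inf.absorb_iff2)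
  hence C1: "closed (fst ` K1)" by (intro compact_imp_closed compact_continuous_image continuous_intros)
  have eqK2: "K2 = {p \<in> {0..1} \<times> Y. c \<le> F (fst p) (snd p)} \<inter> {p \<in> {0..1} \<times> Y. c \<le> h (snd p)}"
    unfolding K2_def by auto
  have cl1K2: "closed {p \<in> {0..1} \<times> Y. c \<le> F (fst p) (snd p)}"
    by (rule continuous_on_closed_Collect_le[OF continuous_on_const cF compact_imp_closed[OF cT]])
  have cl2K2: "closed {p \<in> {0..1::real} \<times> Y. c \<le> h (snd p)}"
    using continuous_on_closed_Collect_le[OF continuous_on_const ch2 compact_imp_closed[OF cT]] by simp
  have "closed K2" unfolding eqK2 by (rule closed_Int[OF cl1K2 cl2K2])
  moreover have "K2 \<subseteq> {0..1} \<times> Y" unfolding K2_def by auto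
  ultimately have "compact K2" using cT by (metis compact_Int_closed inf.absorb_iff2)
  hence C2: "closed (fst ` K2)" by (intro compact_imp_closed compact_continuous_image continuous_intros)
  have cov: "{0..1} \<subseteq> fst ` K1 \<union> fst ` K2"
  proof
    fix t :: real assume t: "t \<in> {0..1}"
    from ex t obtain y where y0: "y \<in> Y" "c \<le> t * g y + (1 - t) * h y" by blast
    hence y: "y \<in> Y" "c \<le> F t y" by (auto simp: F_def)
    then have "(t, y) \<in> K1 \<or> (t, y) \<in> K2" using disj[OF t y(1) y(2)] t unfolding K1_def K2_def by auto
    then show "t \<in> fst ` K1 \<union> fst ` K2" by force
  qed
  have dis: "fst ` K1 \<inter> fst ` K2 \<inter> {0..1} = {}"
  proof (rule ccontr)
    assume "\<not> ?thesis"
    then obtain t y1 y2 where t: "t \<in> {0..1}" and p1: "(t, y1) \<in> K1" and p2: "(t, y2) \<in> K2" by force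
    define Yt where "Yt = {y\<in>Y. c \<le> F t y}"
    have "concave_on Y (F t)" unfolding F_def using concave_comb[OF cg ch] t by auto
    hence "convex Yt" unfolding Yt_def by (rule concave_superlevel_convex)
    hence "connected Yt" by (rule convex_connected)
    moreover have "closed {y\<in>Y. c \<le> g y}" using closedY contg by (intro continuous_on_closed_Collect_le continuous_intros) auto
    moreover have "closed {y\<in>Y. c \<le> h y}" using closedY conth by (intro continuous_on_closed_Collect_le continuous_intros) auto
    moreover have "Yt \<subseteq> {y\<in>Y. c \<le> g y} \<union> {y\<in>Y. c \<le> h y}" using disj t unfolding Yt_def by auto
    moreover have "{y\<in>Y. c \<le> g y} \<inter> {y\<in>Y. c \<le> h y} \<inter> Yt = {}" using lt by force
    moreover have "y1 \<in> {y\<in>Y. c \<le> g y} \<inter> Yt" "y2 \<in> {y\<in>Y. c \<le> h y} \<inter> Yt"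
      using p1 p2 unfolding K1_def K2_def Yt_def by auto
    ultimately show False by (intro conn_split[of Yt "{y\<in>Y. c \<le> g y}" "{y\<in>Y. c \<le> h y}"]) auto
  qed
  have "1 \<in> fst ` K1"
  proof -
    from ex obtain y where y0: "y \<in> Y" "c \<le> 1 * g y + (1 - 1) * h y" by fastforce
    hence y: "y \<in> Y" "c \<le> F 1 y" by (auto simp: F_def)
    hence "(1, y) \<in> K1" unfolding K1_def by (auto simp: F_def)
    thus ?thesis by force
  qed
  moreover have "0 \<in> fst ` K2"
  proof -
    from ex obtain y where y0: "y \<in> Y" "c \<le> 0 * g y + (1 - 0) * h y" by fastforce
    hence y: "y \<in> Y" "c \<le> F 0 y" by (auto simp: F_def)
    hence "(0, y) \<in> K2" unfolding K2_def by (auto simp: F_def)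
    thus ?thesis by force
  qed
  moreover have "connected {0..1::real}" by simp
  ultimately have one: "1 \<in> fst ` K1" and zero: "0 \<in> fst ` K2" and conn: "connected {0..1::real}" by auto
  show False by (rule conn_split[OF conn C1 C2 cov dis]) (use one zero in auto)
qed

lemma concave_alt:
  fixes Y :: "'b::real_normed_vector set" and g :: "'a \<Rightarrow> 'b \<Rightarrow> real"
  assumes "finite I" "I \<noteq> {}" "compact Y" "convex Y" "\<forall>i\<in>I. concave_on Y (g i)"
    "\<forall>i\<in>I. continuous_on Y (g i)" "\<forall>y\<in>Y. \<exists>i\<in>I. g i y < c"
  shows "\<exists>l. (\<forall>i\<in>I. 0 \<le> l i) \<and> sum l I = 1 \<and> (\<forall>y\<in>Y. (\<Sum>i\<in>I. l i * g i y) < c)"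
  using assms
proof (induction I arbitrary: Y rule: finite_ne_induct)
  case (singleton k)
  then show ?case by (intro exI[of _ "\<lambda>_. 1"]) auto
next
  case (insert k I)
  define Y' where "Y' = {y\<in>Y. c \<le> g k y}"
  show ?case
  proof (cases "Y' = {}")
    case True
    show ?thesis
      apply (rule exI[of _ "\<lambda>j. if j = k then 1 else 0"])
    proof (intro conjI ballI)
      have z: "\<And>h::'a\<Rightarrow>real. (\<Sum>i\<in>I. (if i = k then 1 else 0) * h i) = 0"
        using insert.hyps by (intro sum.neutral) auto
      have z2: "(\<Sum>i\<in>I. (if i = k then 1 else 0)::real) = 0"
        using insert.hyps by (intro sum.neutral) auto
      show "sum (\<lambda>j. if j = k then 1 else 0::real) (insert k I) = 1"
        using insert.hyps z2 by simp
      fix y assume "y \<in> Y"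
      then show "(\<Sum>i\<in>insert k I. (if i = k then 1 else 0) * g i y) < c"
        using True insert.hyps z[of "\<lambda>i. g i y"] unfolding Y'_def by (auto simp: not_le)
    qed auto
  next
    case False
    have clY: "closed Y" using insert.prems compact_imp_closed by blast
    have "closed Y'" unfolding Y'_def
      using continuous_on_closed_Collect_le[OF continuous_on_const _ clY, of "g k" c] insert.prems by simp
    hence cY': "compact Y'" using insert.prems(1)
      by (metis (no_types, lifting) Y'_def compact_Int_closed inf.absorb_iff2 mem_Collect_eq subsetI)
    have vY': "convex Y'" unfolding Y'_def using insert.prems by (intro concave_superlevel_convex) auto
    have "Y' \<subseteq> Y" unfolding Y'_def by auto
    have "\<forall>i\<in>I. concave_on Y' (g i)"
      using insert.prems \<open>Y' \<subseteq> Y\<close> vY' unfolding concave_on_def by (metis convex_on_subset insert_iff)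
    moreover have "\<forall>i\<in>I. continuous_on Y' (g i)"
      using insert.prems \<open>Y' \<subseteq> Y\<close> by (metis continuous_on_subset insert_iff)
    moreover have "\<forall>y\<in>Y'. \<exists>i\<in>I. g i y < c"
    proof
      fix y assume y: "y \<in> Y'"
      then obtain i where "i \<in> insert k I" "g i y < c" using insert.prems(5) unfolding Y'_def by auto
      then show "\<exists>i\<in>I. g i y < c" using y unfolding Y'_def by auto
    qed
    ultimately obtain \<mu> where mu: "\<forall>i\<in>I. 0 \<le> \<mu> i" "sum \<mu> I = 1" "\<forall>y\<in>Y'. (\<Sum>i\<in>I. \<mu> i * g i y) < c"
      using insert.IH[OF cY' vY'] by blast
    define G where "G = (\<lambda>y. \<Sum>i\<in>I. \<mu> i * g i y)"
    have cG: "concave_on Y G" unfolding G_def using insert.prems insert.hyps mu by (intro concave_sum) auto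
    have ctG: "continuous_on Y G" unfolding G_def using insert.prems
      by (intro continuous_on_sum continuous_on_mult continuous_on_const) auto
    have "\<forall>y\<in>Y. G y < c \<or> g k y < c" using mu(3) unfolding G_def Y'_def by force
    then obtain t where t: "t \<in> {0..1}" "\<forall>y\<in>Y. t * G y + (1 - t) * g k y < c"
      using two_fun[OF insert.prems(1,2) cG _ ctG, of "g k" c] insert.prems by auto
    show ?thesis
    proof (intro exI[of _ "\<lambda>j. if j = k then 1 - t else t * \<mu> j"] conjI ballI)
      fix i assume "i \<in> insert k I" then show "0 \<le> (if i = k then 1 - t else t * \<mu> i)"
        using t mu by auto
    next
      have "sum (\<lambda>j. if j = k then 1 - t else t * \<mu> j) (insert k I) = (1 - t) + (\<Sum>j\<in>I. t * \<mu> j)"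
        using insert.hyps by (simp add: sum.insert_if) (intro sum.cong, auto)
      also have "\<dots> = 1" using mu by (simp add: sum_distrib_left[symmetric])
      finally show "sum (\<lambda>j. if j = k then 1 - t else t * \<mu> j) (insert k I) = 1" .
    next
      fix y assume y: "y \<in> Y"
      have "(\<Sum>i\<in>insert k I. (if i = k then 1 - t else t * \<mu> i) * g i y) = (1 - t) * g k y + (\<Sum>j\<in>I. t * (\<mu> j * g j y))"
        using insert.hyps by (simp add: sum.insert_if) (intro sum.cong, auto)
      also have "\<dots> = t * G y + (1 - t) * g k y" unfolding G_def by (simp add: sum_distrib_left)
      finally show "(\<Sum>i\<in>insert k I. (if i = k then 1 - t else t * \<mu> i) * g i y) < c" using t y by simp
    qed
  qed
qed



lemma dec_order_prop:
  "distinct (dec_order n x) \<and> set (dec_order n x) = {1..n} \<and> sorted_wrt (\<lambda>a b. x a \<ge> x b) (dec_order n x)"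
proof -
  define js where "js = sort_key (\<lambda>a. - x a) (sorted_list_of_set {1..n})"
  have "distinct js" unfolding js_def by simp
  moreover have "set js = {1..n}" unfolding js_def by simp
  moreover have "sorted (map (\<lambda>a. - x a) js)" unfolding js_def by (rule sorted_sort_key)
  hence "sorted_wrt (\<lambda>a b. x a \<ge> x b) js" by (simp add: sorted_wrt_map)
  ultimately have "\<exists>js. distinct js \<and> set js = {1..n} \<and> sorted_wrt (\<lambda>a b. x a \<ge> x b) js" by blast
  thus ?thesis unfolding dec_order_def by (rule someI_ex)
qed

lemma dec_order_length: "length (dec_order n x) = n"
  using dec_order_prop[of n x] distinct_card by fastforce

lemma abel:
  fixes a G :: "nat \<Rightarrow> real"
  shows "(1 - a 0) * G 0 + (\<Sum>k\<in>{1..m}. (a (k-1) - a k) * G k) + a m * G (Suc m)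
       = G 0 + (\<Sum>k<Suc m. a k * (G (Suc k) - G k))"
proof (induction m)
  case 0 then show ?case by (simp add: algebra_simps)
next
  case (Suc m)
  have "(1 - a 0) * G 0 + (\<Sum>k\<in>{1..Suc m}. (a (k-1) - a k) * G k) + a (Suc m) * G (Suc (Suc m))
     = ((1 - a 0) * G 0 + (\<Sum>k\<in>{1..m}. (a (k-1) - a k) * G k) + a m * G (Suc m))
        + a (Suc m) * (G (Suc (Suc m)) - G (Suc m))"
    by (simp add: algebra_simps)
  also have "\<dots> = G 0 + (\<Sum>k<Suc (Suc m). a k * (G (Suc k) - G k))"
    using Suc.IH by simp
  finally show ?case .
qed

definition Dg :: "(nat set \<Rightarrow> real) \<Rightarrow> nat list \<Rightarrow> nat \<Rightarrow> real" where
  "Dg g js k = g (set (take (Suc k) js)) - g (set (take k js))"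

lemma lovasz_eq:
  "lovasz n g x = g {} + (\<Sum>k<n. x (dec_order n x ! k) * Dg g (dec_order n x) k)"
proof (cases n)
  case 0 then show ?thesis by (simp add: lovasz_def)
next
  case (Suc m)
  define js where "js = dec_order n x"
  have len: "length js = n" unfolding js_def by (rule dec_order_length)
  have setjs: "set js = {1..n}" unfolding js_def using dec_order_prop by blast
  define G where "G = (\<lambda>k. g (set (take k js)))"
  have "lovasz n g x = (1 - x (js ! 0)) * G 0 + (\<Sum>k\<in>{1..m}. (x (js ! (k-1)) - x (js ! k)) * G k)
        + x (js ! m) * G (Suc m)"
    unfolding lovasz_def Let_def js_def[symmetric] G_def using Suc len setjs by simp
  also have "\<dots> = G 0 + (\<Sum>k<Suc m. x (js ! k) * (G (Suc k) - G k))"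
    by (rule abel[where a = "\<lambda>k. x (js ! k)"])
  finally show ?thesis unfolding G_def Dg_def js_def Suc by simp
qed

lemma greedy_bound:
  assumes sub: "submodular_on n g" and sj: "set js = {1..n}" and T: "T \<subseteq> {1..n}"
  shows "g {} + (\<Sum>k<length js. if js ! k \<in> T then Dg g js k else 0) \<le> g T"
proof -
  have "m \<le> length js \<Longrightarrow> g {} + (\<Sum>k<m. if js ! k \<in> T then Dg g js k else 0) \<le> g (T \<inter> set (take m js))" for m
  proof (induction m)
    case 0 then show ?case by simp
  next
    case (Suc m)
    define S where "S = set (take m js)"
    have mlt: "m < length js" using Suc by simp
    have ins: "set (take (Suc m) js) = insert (js ! m) S"
      unfolding S_def using mlt by (simp add: take_Suc_conv_app_nth)
    have Ssub: "S \<subseteq> {1..n}" unfolding S_def using sj set_take_subset[of m js] by simp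
    have jm: "js ! m \<in> {1..n}" using nth_mem[OF mlt] sj by simp
    have IH: "g {} + (\<Sum>k<m. if js ! k \<in> T then Dg g js k else 0) \<le> g (T \<inter> S)"
      using Suc mlt unfolding S_def by simp
    show ?case
    proof (cases "js ! m \<in> T")
      case True
      define T' where "T' = T \<inter> insert (js ! m) S"
      have "g S + g T' \<ge> g (S \<inter> T') + g (S \<union> T')"
        using sub Ssub T unfolding submodular_on_def T'_def by blast
      moreover have "S \<inter> T' = T \<inter> S" unfolding T'_def by auto
      moreover have "S \<union> T' = insert (js ! m) S" unfolding T'_def using True by auto
      ultimately have "Dg g js m \<le> g T' - g (T \<inter> S)"
        unfolding Dg_def ins S_def by simp
      then show ?thesis using IH True unfolding T'_def ins by simp
    next
      case False
      have "T \<inter> set (take (Suc m) js) = T \<inter> S" unfolding ins using False by auto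
      then show ?thesis using IH False by simp
    qed
  qed
  moreover have "T \<inter> set (take (length js) js) = T" using sj T by auto
  ultimately show ?thesis by (metis order_refl)
qed

lemma lovasz_convex:
  assumes sub: "submodular_on n g"
    and l: "\<forall>T\<in>Pow {1..n}. 0 \<le> l T" "sum l (Pow {1..n}) = 1"
    and x: "\<forall>i\<in>{1..n}. x i = (\<Sum>T\<in>Pow {1..n}. l T * (if i \<in> T then 1 else 0))"
  shows "lovasz n g x \<le> (\<Sum>T\<in>Pow {1..n}. l T * g T)"
proof -
  define js where "js = dec_order n x"
  have len: "length js = n" unfolding js_def by (rule dec_order_length)
  have setjs: "set js = {1..n}" unfolding js_def using dec_order_prop by blast
  let ?P = "Pow {1..n}"
  have jk: "k < n \<Longrightarrow> js ! k \<in> {1..n}" for k using len setjs nth_mem[of k js] by simp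
  have "lovasz n g x = g {} + (\<Sum>k<n. x (js ! k) * Dg g js k)"
    unfolding js_def by (rule lovasz_eq)
  also have "\<dots> = g {} + (\<Sum>k<n. \<Sum>T\<in>?P. l T * (if js ! k \<in> T then Dg g js k else 0))"
    using x jk by (intro arg_cong2[where f="(+)"] refl sum.cong) (auto simp: sum_distrib_right intro!: sum.cong)
  also have "\<dots> = (\<Sum>T\<in>?P. l T) * g {} + (\<Sum>T\<in>?P. l T * (\<Sum>k<n. if js ! k \<in> T then Dg g js k else 0))"
    using l by (simp add: sum.swap[of _ "{..<n}"] sum_distrib_left)
  also have "\<dots> = (\<Sum>T\<in>?P. l T * (g {} + (\<Sum>k<n. if js ! k \<in> T then Dg g js k else 0)))"
    by (simp add: sum_distrib_right distrib_left sum.distrib)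
  also have "\<dots> \<le> (\<Sum>T\<in>?P. l T * g T)"
  proof (rule sum_mono)
    fix T assume T: "T \<in> ?P"
    have "g {} + (\<Sum>k<n. if js ! k \<in> T then Dg g js k else 0) \<le> g T"
      using greedy_bound[OF sub setjs, of T] T len by simp
    then show "l T * (g {} + (\<Sum>k<n. if js ! k \<in> T then Dg g js k else 0)) \<le> l T * g T"
      using l T by (intro mult_left_mono) auto
  qed
  finally show ?thesis .
qed



lemma lovasz_vertex:
  assumes x01: "\<forall>i\<in>{1..n}. x i \<in> {0,1}"
  shows "lovasz n g x = g {i\<in>{1..n}. x i = 1}"
proof -
  define js where "js = dec_order n x"
  have len: "length js = n" unfolding js_def by (rule dec_order_length)
  have setjs: "set js = {1..n}" and srt: "sorted_wrt (\<lambda>a b. x a \<ge> x b) js"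
    unfolding js_def using dec_order_prop by blast+
  have jk: "k < n \<Longrightarrow> js ! k \<in> {1..n}" for k using len setjs nth_mem[of k js] by simp
  have val: "k < n \<Longrightarrow> x (js ! k) = 0 \<or> x (js ! k) = 1" for k using x01 jk by auto
  define p where "p = (LEAST k. n \<le> k \<or> x (js ! k) \<noteq> 1)"
  have pn: "p \<le> n" unfolding p_def by (rule Least_le) simp
  have lt: "k < p \<Longrightarrow> k < n \<and> x (js ! k) = 1" for k
    using not_less_Least[of k "\<lambda>k. n \<le> k \<or> x (js ! k) \<noteq> 1"] unfolding p_def by auto
  have ge: "x (js ! k) = 0" if "p \<le> k" "k < n" for k
  proof -
    have "n \<le> p \<or> x (js ! p) \<noteq> 1" unfolding p_def by (rule LeastI[of _ n]) simp
    hence xp: "x (js ! p) = 0" using that val[of p] by auto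
    show ?thesis
    proof (cases "p = k")
      case True then show ?thesis using xp by simp
    next
      case False
      hence "x (js ! k) \<le> x (js ! p)" using sorted_wrt_nth_less[OF srt, of p k] that len by auto
      then show ?thesis using xp val[OF that(2)] by auto
    qed
  qed
  have "lovasz n g x = g {} + (\<Sum>k<n. x (js ! k) * Dg g js k)"
    unfolding js_def by (rule lovasz_eq)
  also have "(\<Sum>k<n. x (js ! k) * Dg g js k) = (\<Sum>k<n. if k < p then Dg g js k else 0)"
    using lt ge by (intro sum.cong) (auto simp: not_less)
  also have "\<dots> = (\<Sum>k\<in>{k\<in>{..<n}. k < p}. Dg g js k)" by (rule sum.inter_filter[symmetric]) simp
  also have "{k\<in>{..<n}. k < p} = {..<p}" using pn by auto
  also have "(\<Sum>k<p. Dg g js k) = g (set (take p js)) - g (set (take 0 js))"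
    unfolding Dg_def by (rule sum_lessThan_telescope)
  also have "set (take p js) = {i\<in>{1..n}. x i = 1}"
  proof (intro set_eqI iffI)
    fix a assume "a \<in> set (take p js)"
    then obtain i where i: "i < p" "js ! i = a" using pn len by (auto simp: in_set_conv_nth)
    then show "a \<in> {i\<in>{1..n}. x i = 1}" using lt[OF i(1)] jk by auto
  next
    fix a assume a: "a \<in> {i\<in>{1..n}. x i = 1}"
    then obtain i where i: "i < n" "js ! i = a" using setjs len by (metis (no_types, lifting) in_set_conv_nth mem_Collect_eq)
    have "i < p" using ge[of i] i a by (metis (mono_tags, lifting) mem_Collect_eq not_le zero_neq_one)
    then show "a \<in> set (take p js)" using i pn len by (auto simp: in_set_conv_nth)
  qed
  finally show ?thesis by simp
qed

lemma lovasz_bound: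
  assumes x: "\<forall>i\<in>{1..n}. 0 \<le> x i \<and> x i \<le> 1"
  shows "\<bar>lovasz n g x\<bar> \<le> (2 * real n + 1) * (\<Sum>S\<in>Pow {1..n}. \<bar>g S\<bar>)"
proof -
  define B where "B = (\<Sum>S\<in>Pow {1..n}. \<bar>g S\<bar>)"
  have gb: "S \<subseteq> {1..n} \<Longrightarrow> \<bar>g S\<bar> \<le> B" for S unfolding B_def
    by (rule member_le_sum) auto
  define js where "js = dec_order n x"
  have len: "length js = n" unfolding js_def by (rule dec_order_length)
  have setjs: "set js = {1..n}" unfolding js_def using dec_order_prop by blast
  have jk: "k < n \<Longrightarrow> js ! k \<in> {1..n}" for k using len setjs nth_mem[of k js] by simp
  have tk: "set (take k js) \<subseteq> {1..n}" for k using set_take_subset[of k js] setjs by simp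
  have Db: "\<bar>x (js ! k) * Dg g js k\<bar> \<le> 2 * B" if "k < n" for k
  proof -
    have "\<bar>Dg g js k\<bar> \<le> 2 * B" unfolding Dg_def using gb[OF tk[of k]] gb[OF tk[of "Suc k"]] by linarith
    moreover have "\<bar>x (js ! k)\<bar> \<le> 1" using x jk[OF that] by auto
    ultimately show ?thesis by (simp add: abs_mult) (metis abs_ge_zero mult_le_one mult.commute mult_left_le_one_le order_trans mult_right_mono)
  qed
  have "\<bar>lovasz n g x\<bar> = \<bar>g {} + (\<Sum>k<n. x (js ! k) * Dg g js k)\<bar>"
    unfolding js_def by (simp add: lovasz_eq)
  also have "\<dots> \<le> \<bar>g {}\<bar> + (\<Sum>k<n. \<bar>x (js ! k) * Dg g js k\<bar>)"
    by (rule order_trans[OF abs_triangle_ineq add_left_mono[OF sum_abs]])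
  also have "(\<Sum>k<n. \<bar>x (js ! k) * Dg g js k\<bar>) \<le> real n * (2 * B)"
    using sum_bounded_above[of "{..<n}" "\<lambda>k. \<bar>x (js ! k) * Dg g js k\<bar>" "2 * B"] Db by simp
  finally show ?thesis using gb[of "{}"] unfolding B_def[symmetric] by (simp add: algebra_simps)
qed

lemma cont_Min:
  fixes F :: "'c \<Rightarrow> 'a::topological_space \<Rightarrow> real"
  assumes "finite P" "P \<noteq> {}" "\<And>S. S \<in> P \<Longrightarrow> continuous_on Y (F S)"
  shows "continuous_on Y (\<lambda>y. MIN S\<in>P. F S y)"
  using assms
proof (induction P rule: finite_ne_induct)
  case (singleton x) then show ?case by simp
next
  case (insert x A)
  have eq: "(\<lambda>y. MIN S\<in>insert x A. F S y) = (\<lambda>y. min (F x y) (MIN S\<in>A. F S y))"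
    using insert.hyps by (simp add: Min_insert)
  have c1: "continuous_on Y (\<lambda>y. MIN S\<in>A. F S y)" using insert.IH insert.prems by blast
  have c2: "continuous_on Y (F x)" using insert.prems by blast
  show ?case unfolding eq by (rule continuous_on_min[OF c2 c1])
qed



theorem proposition1:
  fixes n :: nat and Y :: "(real ^ 'm) set" and f :: "nat set \<Rightarrow> real ^ 'm \<Rightarrow> real"
  assumes "Y \<noteq> {}" and "convex Y" and "compact Y"
    and "\<And>y. submodular_on n (\<lambda>S. f S y)"
    and "\<And>S. S \<subseteq> {1..n} \<Longrightarrow> concave_on UNIV (f S)"
    and "\<And>S. S \<subseteq> {1..n} \<Longrightarrow> continuous_on UNIV (f S)"
  shows "(SUP y\<in>Y. MIN S\<in>Pow {1..n}. f S y) \<le> (MIN S\<in>Pow {1..n}. SUP y\<in>Y. f S y)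
    \<and> ((INF x\<in>{1..n} \<rightarrow>\<^sub>E {0..1}. SUP y\<in>Y. lovasz2 n f x y)
           = (INF x\<in>{1..n} \<rightarrow>\<^sub>E {0,1}. SUP y\<in>Y. lovasz2 n f x y)
         \<longrightarrow> (SUP y\<in>Y. MIN S\<in>Pow {1..n}. f S y) = (MIN S\<in>Pow {1..n}. SUP y\<in>Y. f S y)
           \<and> (MIN S\<in>Pow {1..n}. SUP y\<in>Y. f S y) = (INF x\<in>{1..n} \<rightarrow>\<^sub>E {0..1}. SUP y\<in>Y. lovasz2 n f x y)
           \<and> (\<exists>S0 y0. saddle_point n f Y S0 y0))"
proof -
  let ?P = "Pow {1..n}"
  have finP: "finite ?P" and neP: "?P \<noteq> {}" by auto
  have contS: "continuous_on Y (f S)" if "S \<in> ?P" for S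
    using assms(6)[of S] that continuous_on_subset by blast
  have concS: "concave_on Y (f S)" if "S \<in> ?P" for S
    using assms(5)[of S] that assms(2) unfolding concave_on_def by (metis PowD convex_on_subset subset_UNIV)
  have bddS: "bdd_above (f S ` Y)" if "S \<in> ?P" for S
    by (rule bounded_imp_bdd_above, rule compact_imp_bounded, rule compact_continuous_image[OF contS[OF that] assms(3)])
  define h where "h = (\<lambda>y. MIN S\<in>?P. f S y)"
  have h_le: "h y \<le> f S y" if "S \<in> ?P" for S y
    unfolding h_def using that finP by (intro Min_le) auto
  have h_ex: "\<exists>S\<in>?P. f S y = h y" for y
  proof -
    have "h y \<in> (\<lambda>S. f S y) ` ?P" unfolding h_def using finP neP by (intro Min_in) auto
    then show ?thesis by auto
  qed
  have conth: "continuous_on Y h" unfolding h_def using finP neP contS by (intro cont_Min) auto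
  obtain y0 where y0: "y0 \<in> Y" "\<forall>y\<in>Y. h y \<le> h y0"
    using continuous_attains_sup[OF assms(3,1) conth] by blast
  define c where "c = (SUP y\<in>Y. h y)"
  have c_eq: "c = h y0" unfolding c_def using y0 by (intro cSup_eq_maximum) auto
  define \<psi> where "\<psi> = (\<lambda>S. SUP y\<in>Y. f S y)"
  have psi_ge: "f S y \<le> \<psi> S" if "S \<in> ?P" "y \<in> Y" for S y
    unfolding \<psi>_def using bddS[OF that(1)] that(2) by (rule cSUP_upper2) simp
  define v where "v = (MIN S\<in>?P. \<psi> S)"
  have part1: "c \<le> v" unfolding v_def
  proof (rule Min.boundedI)
    show "finite (\<psi> ` ?P)" "\<psi> ` ?P \<noteq> {}" using finP neP by auto
    fix a assume "a \<in> \<psi> ` ?P"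
    then obtain S where S: "S \<in> ?P" "a = \<psi> S" by auto
    show "c \<le> a" using c_eq h_le[OF S(1), of y0] psi_ge[OF S(1) y0(1)] S(2) by simp
  qed
  define \<Phi> where "\<Phi> = (\<lambda>x. SUP y\<in>Y. lovasz2 n f x y)"
  define Bf where "Bf = (\<lambda>y. \<Sum>S\<in>?P. \<bar>f S y\<bar>)"
  have contB: "continuous_on Y Bf" unfolding Bf_def using contS
    by (intro continuous_on_sum continuous_on_rabs) auto
  obtain yb where yb: "yb \<in> Y" "\<forall>y\<in>Y. Bf y \<le> Bf yb"
    using continuous_attains_sup[OF assms(3,1) contB] by blast
  define Bm where "Bm = (2 * real n + 1) * Bf yb"
  let ?C = "{1..n} \<rightarrow>\<^sub>E {0..1::real}"
  let ?V = "{1..n} \<rightarrow>\<^sub>E {0,1::real}"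
  have Lb: "\<bar>lovasz2 n f x y\<bar> \<le> Bm" if "x \<in> ?C" "y \<in> Y" for x y
  proof -
    have "\<forall>i\<in>{1..n}. 0 \<le> x i \<and> x i \<le> 1" using that(1) by auto
    hence "\<bar>lovasz2 n f x y\<bar> \<le> (2 * real n + 1) * Bf y"
      unfolding lovasz2_def Bf_def by (rule lovasz_bound)
    also have "\<dots> \<le> Bm" unfolding Bm_def using yb that(2) by (intro mult_left_mono) auto
    finally show ?thesis .
  qed
  have bddL: "bdd_above ((\<lambda>y. lovasz2 n f x y) ` Y)" if "x \<in> ?C" for x
    using Lb[OF that] by (intro bdd_aboveI[of _ Bm]) (auto simp: abs_le_iff)
  have Phi_lb: "- Bm \<le> \<Phi> x" if "x \<in> ?C" for x
  proof -
    have "- Bm \<le> lovasz2 n f x y0" using Lb[OF that y0(1)] by (simp add: abs_le_iff)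
    also have "\<dots> \<le> \<Phi> x" unfolding \<Phi>_def using bddL[OF that] y0(1) by (rule cSUP_upper2) simp
    finally show ?thesis .
  qed
  have VC: "?V \<subseteq> ?C" by (rule PiE_mono) auto
  have bddC: "bdd_below (\<Phi> ` ?C)" using Phi_lb by (intro bdd_belowI[of _ "- Bm"]) auto
  define chi where "chi = (\<lambda>S. (\<lambda>i\<in>{1..n}. if i \<in> S then 1 else 0::real))"
  have chiV: "chi S \<in> ?V" for S unfolding chi_def by auto
  have chi_set: "{i\<in>{1..n}. chi S i = 1} = S" if "S \<in> ?P" for S
    using that unfolding chi_def by auto
  have V_eq: "?V = chi ` ?P"
  proof (intro subset_antisym subsetI)
    fix x assume x: "x \<in> ?V"
    have "x = chi {i\<in>{1..n}. x i = 1}"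
    proof
      fix i show "x i = chi {i\<in>{1..n}. x i = 1} i"
      proof (cases "i \<in> {1..n}")
        case True
        have "chi {i\<in>{1..n}. x i = 1} i = (if x i = 1 then 1 else 0)"
          unfolding chi_def restrict_apply'[OF True] using True by simp
        moreover have "x i \<in> {0,1}" using PiE_mem[OF x True] .
        ultimately show ?thesis by auto
      next
        case False
        have "chi {i\<in>{1..n}. x i = 1} i = undefined"
          unfolding chi_def using False by (auto simp: restrict_def)
        then show ?thesis using PiE_arb[OF x False] by simp
      qed
    qed
    moreover have "{i\<in>{1..n}. x i = 1} \<in> ?P" by auto
    ultimately show "x \<in> chi ` ?P" by (rule image_eqI)
  next
    fix x assume "x \<in> chi ` ?P"
    then show "x \<in> ?V" using chiV by blast
  qed
  have Phi_chi: "\<Phi> (chi S) = \<psi> S" if "S \<in> ?P" for S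
  proof -
    have "\<forall>i\<in>{1..n}. chi S i \<in> {0,1}" unfolding chi_def by auto
    hence "lovasz2 n f (chi S) y = f S y" for y
      unfolding lovasz2_def using lovasz_vertex chi_set[OF that] by metis
    then show ?thesis unfolding \<Phi>_def \<psi>_def by simp
  qed
  have Ivert: "(INF x\<in>?V. \<Phi> x) = v"
  proof -
    have "(INF x\<in>?V. \<Phi> x) = (INF S\<in>?P. \<Phi> (chi S))" unfolding V_eq image_image by simp
    also have "\<dots> = (INF S\<in>?P. \<psi> S)" using Phi_chi by (intro INF_cong) auto
    also have "\<dots> = v" unfolding v_def using finP neP by (intro cInf_eq_Min) auto
    finally show ?thesis .
  qed
  have Icube: "(INF x\<in>?C. \<Phi> x) \<le> c"
  proof (rule field_le_epsilon)
    fix e :: real assume e: "0 < e"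
    have "\<forall>y\<in>Y. \<exists>S\<in>?P. f S y < c + e"
    proof
      fix y assume y: "y \<in> Y"
      obtain S where S: "S \<in> ?P" "f S y = h y" using h_ex by blast
      have "h y \<le> c" using y0(2) y c_eq by simp
      then have "f S y < c + e" using S(2) e by simp
      then show "\<exists>S\<in>?P. f S y < c + e" using S(1) by blast
    qed
    then obtain l where l: "\<forall>S\<in>?P. 0 \<le> l S" "sum l ?P = 1" "\<forall>y\<in>Y. (\<Sum>S\<in>?P. l S * f S y) < c + e"
      using concave_alt[OF finP neP assms(3,2), of f "c + e"] concS contS by blast
    define x where "x = (\<lambda>i\<in>{1..n}. \<Sum>T\<in>?P. l T * (if i \<in> T then 1 else 0::real))"
    have xC: "x \<in> ?C"
    proof -
      have "0 \<le> (\<Sum>T\<in>?P. l T * (if i \<in> T then 1 else 0::real))" for i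
        using l by (intro sum_nonneg) auto
      moreover have "(\<Sum>T\<in>?P. l T * (if i \<in> T then 1 else 0::real)) \<le> 1" for i
      proof -
        have "(\<Sum>T\<in>?P. l T * (if i \<in> T then 1 else 0::real)) \<le> (\<Sum>T\<in>?P. l T)"
          using l by (intro sum_mono) auto
        then show ?thesis using l by simp
      qed
      ultimately show ?thesis unfolding x_def by auto
    qed
    have "\<Phi> x \<le> c + e" unfolding \<Phi>_def
    proof (rule cSUP_least[OF assms(1)])
      fix y assume y: "y \<in> Y"
      have "lovasz2 n f x y \<le> (\<Sum>S\<in>?P. l S * f S y)"
        unfolding lovasz2_def using assms(4) l(1,2) by (intro lovasz_convex) (auto simp: x_def)
      then show "lovasz2 n f x y \<le> c + e" using l(3) y by fastforce
    qed
    moreover have "(INF x\<in>?C. \<Phi> x) \<le> \<Phi> x" using bddC xC by (rule cINF_lower)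
    ultimately show "(INF x\<in>?C. \<Phi> x) \<le> c + e" by simp
  qed
  have part2: "(INF x\<in>?C. \<Phi> x) = (INF x\<in>?V. \<Phi> x) \<longrightarrow>
     c = v \<and> v = (INF x\<in>?C. \<Phi> x) \<and> (\<exists>S0 y0. saddle_point n f Y S0 y0)"
  proof
    assume hyp: "(INF x\<in>?C. \<Phi> x) = (INF x\<in>?V. \<Phi> x)"
    have cv: "c = v" using hyp Ivert Icube part1 by simp
    moreover have "v = (INF x\<in>?C. \<Phi> x)" using hyp Ivert by simp
    moreover have "\<exists>S0 y0. saddle_point n f Y S0 y0"
    proof -
      have "v \<in> \<psi> ` ?P" unfolding v_def using finP neP by (intro Min_in) auto
      then obtain S0 where S0: "S0 \<in> ?P" "\<psi> S0 = v" by auto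
      have "saddle_point n f Y S0 y0"
        unfolding saddle_point_def
      proof (intro conjI allI impI)
        show "S0 \<subseteq> {1..n}" using S0 by simp
        show "y0 \<in> Y" by (rule y0(1))
        fix S y assume S: "S \<subseteq> {1..n}" and y: "y \<in> Y"
        show "f S0 y \<le> f S0 y0" using psi_ge[OF S0(1) y] S0(2) cv c_eq h_le[OF S0(1), of y0] by simp
        show "f S0 y0 \<le> f S y0" using psi_ge[OF S0(1) y0(1)] S0(2) cv c_eq h_le[of S y0] S by simp
      qed
      then show ?thesis by blast
    qed
    ultimately show "c = v \<and> v = (INF x\<in>?C. \<Phi> x) \<and> (\<exists>S0 y0. saddle_point n f Y S0 y0)" by blast
  qed
  show ?thesis using part1 part2 unfolding c_def h_def v_def \<psi>_def \<Phi>_def by blast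
qed

end
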